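(* Let $B=(V,E,>)$ be a non-elementary $k$-simple ordered Bratteli diagram, let $X_B$ be its space of infinite paths and $\sigma:X_B\to X_B$ its Bratteli–Vershik map. Then $(X_B,\sigma)$ has exactly $k$ minimal subsets.
   Context: A Bratteli diagram $B=(V,E)$ has finite nonempty vertex sets $V^0=\{v_0\},V^1,V^2,\dots$ and finite edge sets $E^0,E^1,\dots$, with source and range maps $s(E^n)=V^n$, $r(E^n)=V^{n+1}$. Finite paths are sequences of consecutive edges; a vertex $w$ at level $m$ is connected to a vertex $v$ at level $n<m$ if some finite path goes from $v$ to $w$. $B$ is $k$-simple if for each $n\ge1$ there are pairwise disjoint $V^n_1,\dots,V^n_k\subseteq V^n$ with (i) $s(r^{-1}(v))\subseteq V^n_i$ for every $v\in V^{n+1}_i$; (ii) for each $i,n$ there is $m>n$ such that every vertex of $V^m_i$ is connected to every vertex of $V^n_i$. Put $V^n_o=V^n\setminus\bigcup_iV^n_i$. $B$ is non-elementary if for every $n$ there is $m>n$ such that the number of paths between any vertex of $V^n_o$ and any vertex of $V^m_o$ is either $0$ or at least $2$. An order on $B$ is a linear order on each $r^{-1}(v)$; it induces the lexicographic order on finite paths with common range (compare at the highest-level edge where they differ); $e+1$ denotes the successor of $e$. $E_{\max},E_{\min}$ are the maximal/minimal edges, $X_{\max},X_{\min}$ the infinite paths all of whose edges are maximal/minimal. $(V,E,>)$ is a $k$-simple ordered Bratteli diagram if: (1) $(V,E)$ is $k$-simple; (2) there are infinite paths $z_{i,\max},z_{i,\min}$ ($1\le i\le k$) whose level-$n$ vertices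 lie in $V^n_i$ for all $n\ge1$, with $X_{\max}=\{z_{1,\max},\dots,z_{k,\max}\}$, $X_{\min}=\{z_{1,\min},\dots,z_{k,\min}\}$; then there is $L$ such that for $n\ge L$ and $v\in V^n_o$ the maximal (resp. minimal) finite path from $v_0$ to $v$ passes at level $1$ through $V^1_i$ for some $i$, written $m_+(v)=i$ (resp. $m_-(v)=i$); (3) for $v\in V^n_o$: (a) for every edge $e$ with $s(e)=v$, $m_-(s(e+1))=m_+(v)$ (if $e$ is maximal, $s(e+1)$ means the level-$n$ source of the lexicographic successor of a non-maximal finite path starting with $e$ and ending at some level $m>n$); (b) if $e\notin E_{\max}$, $r(e)=v$, $s(e)\in V^{n-1}_i$ and $n\ge3$, then $m_-(s(e+1))=i$. The Vershik map: $\sigma(z_{i,\max})=z_{i,\min}$; for other $x=(x^1,x^2,\dots)$, let $d$ be least with $x^d$ not maximal, and set $\sigma(x)=(f^1,\dots,f^{d-1},x^d+1,x^{d+1},\dots)$ where $(f^1,\dots,f^{d-1})$ is the minimal path from $v_0$ to $s(x^d+1)$. $X_B$ carries the topology generated by cylinder sets and $\sigma$ is a homeomorphism. A minimal subset is a nonempty closed invariant set containing no nonempty proper closed invariant subset. *)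

theory Defs
  imports "HOL-Analysis.Analysis"
begin

text \<open>Vertices at level n form V n, edges from level n to level n+1 form E n
  (so the paper's E^n is E n, and the paper's path coordinate x^(n+1) is x n here).
  s and r are the source and range maps.\<close>

definition bratteli_diagram ::
  "(nat \<Rightarrow> 'v set) \<Rightarrow> (nat \<Rightarrow> 'e set) \<Rightarrow> ('e \<Rightarrow> 'v) \<Rightarrow> ('e \<Rightarrow> 'v) \<Rightarrow> 'v \<Rightarrow> bool" where
  "bratteli_diagram V E s r v0 \<longleftrightarrow>
     V 0 = {v0} \<and>
     (\<forall>n. finite (V n) \<and> V n \<noteq> {} \<and> finite (E n)) \<and>
     (\<forall>n. s ` E n = V n \<and> r ` E n = V (Suc n)) \<and>
     (\<forall>n m. n \<noteq> m \<longrightarrow> V n \<inter> V m = {} \<and> E n \<inter> E m = {})"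

definition fpaths :: "(nat \<Rightarrow> 'e set) \<Rightarrow> ('e \<Rightarrow> 'v) \<Rightarrow> ('e \<Rightarrow> 'v) \<Rightarrow> nat \<Rightarrow> nat \<Rightarrow> 'e list set" where
  "fpaths E s r n m = {p. length p = m - n \<and> (\<forall>j<length p. p!j \<in> E (n+j)) \<and>
                           (\<forall>j. Suc j < length p \<longrightarrow> r (p!j) = s (p!Suc j))}"

definition paths_between ::
  "(nat \<Rightarrow> 'e set) \<Rightarrow> ('e \<Rightarrow> 'v) \<Rightarrow> ('e \<Rightarrow> 'v) \<Rightarrow> nat \<Rightarrow> nat \<Rightarrow> 'v \<Rightarrow> 'v \<Rightarrow> 'e list set" where
  "paths_between E s r n m v w = {p \<in> fpaths E s r n m. n \<le> m \<and>
       (if p = [] then v = w else s (hd p) = v \<and> r (last p) = w)}"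

definition paths_to ::
  "(nat \<Rightarrow> 'e set) \<Rightarrow> ('e \<Rightarrow> 'v) \<Rightarrow> ('e \<Rightarrow> 'v) \<Rightarrow> nat \<Rightarrow> nat \<Rightarrow> 'v \<Rightarrow> 'e list set" where
  "paths_to E s r n m w = {p \<in> fpaths E s r n m. p \<noteq> [] \<and> r (last p) = w}"

definition connected_to ::
  "(nat \<Rightarrow> 'e set) \<Rightarrow> ('e \<Rightarrow> 'v) \<Rightarrow> ('e \<Rightarrow> 'v) \<Rightarrow> nat \<Rightarrow> nat \<Rightarrow> 'v \<Rightarrow> 'v \<Rightarrow> bool" where
  "connected_to E s r n m v w \<longleftrightarrow> n < m \<and> paths_between E s r n m v w \<noteq> {}"

text \<open>Vi n i is the set V^n_i (meaningful for n \<ge> 1 and 1 \<le> i \<le> k).\<close>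
definition k_simple ::
  "(nat \<Rightarrow> 'v set) \<Rightarrow> (nat \<Rightarrow> 'e set) \<Rightarrow> ('e \<Rightarrow> 'v) \<Rightarrow> ('e \<Rightarrow> 'v) \<Rightarrow> nat \<Rightarrow> (nat \<Rightarrow> nat \<Rightarrow> 'v set) \<Rightarrow> bool" where
  "k_simple V E s r k Vi \<longleftrightarrow>
     (\<forall>n\<ge>1. \<forall>i\<in>{1..k}. Vi n i \<subseteq> V n) \<and>
     (\<forall>n\<ge>1. \<forall>i\<in>{1..k}. \<forall>j\<in>{1..k}. i \<noteq> j \<longrightarrow> Vi n i \<inter> Vi n j = {}) \<and>
     (\<forall>n\<ge>1. \<forall>i\<in>{1..k}. \<forall>v\<in>Vi (Suc n) i. s ` {e \<in> E n. r e = v} \<subseteq> Vi n i) \<and>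
     (\<forall>n\<ge>1. \<forall>i\<in>{1..k}. \<exists>m>n. \<forall>w\<in>Vi m i. \<forall>v\<in>Vi n i. connected_to E s r n m v w)"

definition Vo :: "(nat \<Rightarrow> 'v set) \<Rightarrow> nat \<Rightarrow> (nat \<Rightarrow> nat \<Rightarrow> 'v set) \<Rightarrow> nat \<Rightarrow> 'v set" where
  "Vo V k Vi n = V n - (\<Union>i\<in>{1..k}. Vi n i)"

definition non_elementary ::
  "(nat \<Rightarrow> 'v set) \<Rightarrow> (nat \<Rightarrow> 'e set) \<Rightarrow> ('e \<Rightarrow> 'v) \<Rightarrow> ('e \<Rightarrow> 'v) \<Rightarrow> nat \<Rightarrow> (nat \<Rightarrow> nat \<Rightarrow> 'v set) \<Rightarrow> bool" where
  "non_elementary V E s r k Vi \<longleftrightarrow>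
     (\<forall>n\<ge>1. \<exists>m>n. \<forall>v\<in>Vo V k Vi n. \<forall>w\<in>Vo V k Vi m.
        card (paths_between E s r n m v w) = 0 \<or> card (paths_between E s r n m v w) \<ge> 2)"

text \<open>The order is a relation ord (pairs (e,e') meaning e < e') that relates only edges with a
  common range and is a strict linear order on each r^{-1}(v).\<close>
definition ordered_diagram ::
  "(nat \<Rightarrow> 'v set) \<Rightarrow> (nat \<Rightarrow> 'e set) \<Rightarrow> ('e \<Rightarrow> 'v) \<Rightarrow> ('e \<times> 'e) set \<Rightarrow> bool" where
  "ordered_diagram V E r ord \<longleftrightarrow>
     ord \<subseteq> {(a,b). \<exists>n. a \<in> E n \<and> b \<in> E n \<and> r a = r b} \<and>
     (\<forall>n. \<forall>v\<in>V (Suc n). strict_linear_order_on {e \<in> E n. r e = v} ord) \<and>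
     trans ord \<and> irrefl ord"

text \<open>Lexicographic order on finite paths with common range: compare at the highest edge
  where they differ.\<close>
definition lexless :: "('e \<times> 'e) set \<Rightarrow> 'e list \<Rightarrow> 'e list \<Rightarrow> bool" where
  "lexless ord p q \<longleftrightarrow> length p = length q \<and>
     (\<exists>j<length p. (p!j, q!j) \<in> ord \<and> (\<forall>i. j < i \<and> i < length p \<longrightarrow> p!i = q!i))"

definition lex_succ :: "('e \<times> 'e) set \<Rightarrow> 'e list set \<Rightarrow> 'e list \<Rightarrow> 'e list \<Rightarrow> bool" where
  "lex_succ ord P p q \<longleftrightarrow> p \<in> P \<and> q \<in> P \<and> lexless ord p q \<and>
     \<not> (\<exists>t\<in>P. lexless ord p t \<and> lexless ord t q)"

definition is_max_in :: "('e \<times> 'e) set \<Rightarrow> 'e list set \<Rightarrow> 'e list \<Rightarrow> bool" where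
  "is_max_in ord P p \<longleftrightarrow> p \<in> P \<and> (\<forall>q\<in>P. q \<noteq> p \<longrightarrow> lexless ord q p)"

definition is_min_in :: "('e \<times> 'e) set \<Rightarrow> 'e list set \<Rightarrow> 'e list \<Rightarrow> bool" where
  "is_min_in ord P p \<longleftrightarrow> p \<in> P \<and> (\<forall>q\<in>P. q \<noteq> p \<longrightarrow> lexless ord p q)"

definition emax :: "(nat \<Rightarrow> 'e set) \<Rightarrow> ('e \<Rightarrow> 'v) \<Rightarrow> ('e \<times> 'e) set \<Rightarrow> nat \<Rightarrow> 'e \<Rightarrow> bool" where
  "emax E r ord n e \<longleftrightarrow> e \<in> E n \<and> (\<forall>e'\<in>E n. r e' = r e \<longrightarrow> (e, e') \<notin> ord)"

definition emin :: "(nat \<Rightarrow> 'e set) \<Rightarrow> ('e \<Rightarrow> 'v) \<Rightarrow> ('e \<times> 'e) set \<Rightarrow> nat \<Rightarrow> 'e \<Rightarrow> bool" where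
  "emin E r ord n e \<longleftrightarrow> e \<in> E n \<and> (\<forall>e'\<in>E n. r e' = r e \<longrightarrow> (e', e) \<notin> ord)"

definition esucc :: "(nat \<Rightarrow> 'e set) \<Rightarrow> ('e \<Rightarrow> 'v) \<Rightarrow> ('e \<times> 'e) set \<Rightarrow> nat \<Rightarrow> 'e \<Rightarrow> 'e" where
  "esucc E r ord n e = (THE e'. e' \<in> E n \<and> r e' = r e \<and> (e, e') \<in> ord \<and>
      (\<forall>e''\<in>E n. r e'' = r e \<and> (e, e'') \<in> ord \<longrightarrow> e'' = e' \<or> (e', e'') \<in> ord))"

definition m_plus ::
  "(nat \<Rightarrow> 'e set) \<Rightarrow> ('e \<Rightarrow> 'v) \<Rightarrow> ('e \<Rightarrow> 'v) \<Rightarrow> ('e \<times> 'e) set \<Rightarrow> 'v \<Rightarrow> (nat \<Rightarrow> nat \<Rightarrow> 'v set)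
     \<Rightarrow> nat \<Rightarrow> 'v \<Rightarrow> nat \<Rightarrow> bool" where
  "m_plus E s r ord v0 Vi n v i \<longleftrightarrow>
     (\<exists>p. is_max_in ord (paths_between E s r 0 n v0 v) p \<and> r (p!0) \<in> Vi 1 i)"

definition m_minus ::
  "(nat \<Rightarrow> 'e set) \<Rightarrow> ('e \<Rightarrow> 'v) \<Rightarrow> ('e \<Rightarrow> 'v) \<Rightarrow> ('e \<times> 'e) set \<Rightarrow> 'v \<Rightarrow> (nat \<Rightarrow> nat \<Rightarrow> 'v set)
     \<Rightarrow> nat \<Rightarrow> 'v \<Rightarrow> nat \<Rightarrow> bool" where
  "m_minus E s r ord v0 Vi n v i \<longleftrightarrow>
     (\<exists>p. is_min_in ord (paths_between E s r 0 n v0 v) p \<and> r (p!0) \<in> Vi 1 i)"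

definition XB :: "(nat \<Rightarrow> 'e set) \<Rightarrow> ('e \<Rightarrow> 'v) \<Rightarrow> ('e \<Rightarrow> 'v) \<Rightarrow> (nat \<Rightarrow> 'e) set" where
  "XB E s r = {x. \<forall>n. x n \<in> E n \<and> r (x n) = s (x (Suc n))}"

definition Xmax :: "(nat \<Rightarrow> 'e set) \<Rightarrow> ('e \<Rightarrow> 'v) \<Rightarrow> ('e \<Rightarrow> 'v) \<Rightarrow> ('e \<times> 'e) set \<Rightarrow> (nat \<Rightarrow> 'e) set" where
  "Xmax E s r ord = {x \<in> XB E s r. \<forall>n. emax E r ord n (x n)}"

definition Xmin :: "(nat \<Rightarrow> 'e set) \<Rightarrow> ('e \<Rightarrow> 'v) \<Rightarrow> ('e \<Rightarrow> 'v) \<Rightarrow> ('e \<times> 'e) set \<Rightarrow> (nat \<Rightarrow> 'e) set" where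
  "Xmin E s r ord = {x \<in> XB E s r. \<forall>n. emin E r ord n (x n)}"

definition cylinders :: "(nat \<Rightarrow> 'e set) \<Rightarrow> ('e \<Rightarrow> 'v) \<Rightarrow> ('e \<Rightarrow> 'v) \<Rightarrow> (nat \<Rightarrow> 'e) set set" where
  "cylinders E s r = {{x \<in> XB E s r. \<forall>j<length c. x j = c!j} | c. True}"

definition XB_topology :: "(nat \<Rightarrow> 'e set) \<Rightarrow> ('e \<Rightarrow> 'v) \<Rightarrow> ('e \<Rightarrow> 'v) \<Rightarrow> (nat \<Rightarrow> 'e) topology" where
  "XB_topology E s r = topology_generated_by (cylinders E s r)"

definition vershik ::
  "(nat \<Rightarrow> 'e set) \<Rightarrow> ('e \<Rightarrow> 'v) \<Rightarrow> ('e \<Rightarrow> 'v) \<Rightarrow> 'v \<Rightarrow> ('e \<times> 'e) set \<Rightarrow> nat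
     \<Rightarrow> (nat \<Rightarrow> nat \<Rightarrow> 'e) \<Rightarrow> (nat \<Rightarrow> nat \<Rightarrow> 'e) \<Rightarrow> (nat \<Rightarrow> 'e) \<Rightarrow> (nat \<Rightarrow> 'e)" where
  "vershik E s r v0 ord k zmax zmin x =
     (if \<exists>i\<in>{1..k}. x = zmax i then zmin (SOME i. i \<in> {1..k} \<and> x = zmax i)
      else (let d = (LEAST d. \<not> emax E r ord d (x d));
                e' = esucc E r ord d (x d);
                f = (THE f. is_min_in ord (paths_between E s r 0 d v0 (s e')) f)
            in (\<lambda>j. if j < d then f!j else if j = d then e' else x j)))"

definition k_simple_ordered ::
  "(nat \<Rightarrow> 'v set) \<Rightarrow> (nat \<Rightarrow> 'e set) \<Rightarrow> ('e \<Rightarrow> 'v) \<Rightarrow> ('e \<Rightarrow> 'v) \<Rightarrow> 'v \<Rightarrow> ('e \<times> 'e) set \<Rightarrow> nat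
     \<Rightarrow> (nat \<Rightarrow> nat \<Rightarrow> 'v set) \<Rightarrow> (nat \<Rightarrow> nat \<Rightarrow> 'e) \<Rightarrow> (nat \<Rightarrow> nat \<Rightarrow> 'e) \<Rightarrow> bool" where
  "k_simple_ordered V E s r v0 ord k Vi zmax zmin \<longleftrightarrow>
     \<comment> \<open>(1)\<close>
     k_simple V E s r k Vi \<and>
     \<comment> \<open>(2)\<close>
     (\<forall>i\<in>{1..k}. zmax i \<in> XB E s r \<and> zmin i \<in> XB E s r \<and>
        (\<forall>n\<ge>1. s (zmax i n) \<in> Vi n i \<and> s (zmin i n) \<in> Vi n i)) \<and>
     Xmax E s r ord = zmax ` {1..k} \<and> Xmin E s r ord = zmin ` {1..k} \<and>
     \<comment> \<open>(3a), e not maximal: s(e+1) is the source of the successor edge\<close>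
     (\<forall>n\<ge>1. \<forall>v\<in>Vo V k Vi n. \<forall>e\<in>E n. s e = v \<longrightarrow> \<not> emax E r ord n e \<longrightarrow>
        (\<forall>i. m_plus E s r ord v0 Vi n v i \<longrightarrow>
             m_minus E s r ord v0 Vi n (s (esucc E r ord n e)) i)) \<and>
     \<comment> \<open>(3a), e maximal: s(e+1) is the level-n source of the lexicographic successor of a
         non-maximal finite path starting with e\<close>
     (\<forall>n\<ge>1. \<forall>v\<in>Vo V k Vi n. \<forall>e\<in>E n. s e = v \<longrightarrow> emax E r ord n e \<longrightarrow>
        (\<forall>m>n. \<forall>w p q. p \<in> paths_to E s r n m w \<longrightarrow> p!0 = e \<longrightarrow>
            lex_succ ord (paths_to E s r n m w) p q \<longrightarrow>
            (\<forall>i. m_plus E s r ord v0 Vi n v i \<longrightarrow> m_minus E s r ord v0 Vi n (s (q!0)) i))) \<and>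
     \<comment> \<open>(3b)\<close>
     (\<forall>n\<ge>3. \<forall>v\<in>Vo V k Vi n. \<forall>e\<in>E (n - 1). \<forall>i\<in>{1..k}.
        \<not> emax E r ord (n - 1) e \<longrightarrow> r e = v \<longrightarrow> s e \<in> Vi (n - 1) i \<longrightarrow>
        m_minus E s r ord v0 Vi (n - 1) (s (esucc E r ord (n - 1) e)) i)"

definition minimal_subset :: "'a topology \<Rightarrow> ('a \<Rightarrow> 'a) \<Rightarrow> 'a set \<Rightarrow> bool" where
  "minimal_subset T f A \<longleftrightarrow> A \<noteq> {} \<and> closedin T A \<and> f ` A = A \<and>
     (\<forall>B. B \<subseteq> A \<and> B \<noteq> {} \<and> closedin T B \<and> f ` B = B \<longrightarrow> B = A)"

end

theory Submission
  imports Defs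
begin



lemma finite_linear_min:
  assumes "finite A" "A \<noteq> {}"
    and tr: "\<And>a b c. P a b \<Longrightarrow> P b c \<Longrightarrow> P a c"
    and tot: "\<And>a b. a \<in> A \<Longrightarrow> b \<in> A \<Longrightarrow> a \<noteq> b \<Longrightarrow> P a b \<or> P b a"
  shows "\<exists>m\<in>A. \<forall>a\<in>A. a \<noteq> m \<longrightarrow> P m a"
  using assms(1,2) tot
proof (induction A rule: finite_ne_induct)
  case (singleton x) then show ?case by auto
next
  case (insert x F)
  then obtain m where m: "m \<in> F" "\<forall>a\<in>F. a \<noteq> m \<longrightarrow> P m a" by auto
  show ?case
  proof (cases "P x m")
    case True
    then show ?thesis using m tr by (intro bexI[of _ x]) auto
  next
    case False
    then have "P m x" using insert.prems[of x m] m insert.hyps by auto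
    then show ?thesis using m by (intro bexI[of _ m]) auto
  qed
qed

primrec kS :: "(nat \<Rightarrow> nat \<Rightarrow> 'e) \<Rightarrow> nat \<Rightarrow> nat set" where
  "kS y 0 = UNIV"
| "kS y (Suc L) = {N \<in> kS y L. y N L = (SOME e. infinite {N \<in> kS y L. y N L = e})}"

definition kz :: "(nat \<Rightarrow> nat \<Rightarrow> 'e) \<Rightarrow> nat \<Rightarrow> 'e" where
  "kz y L = (SOME e. infinite {N \<in> kS y L. y N L = e})"

lemma kS_Suc: "kS y (Suc L) = {N \<in> kS y L. y N L = kz y L}"
  by (simp add: kz_def)

declare kS.simps(2)[simp del]

lemma kS_infinite:
  assumes "\<And>N L. y N L \<in> F L" "\<And>L. finite (F L)"
  shows "infinite (kS y L)"
proof (induction L)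
  case 0 then show ?case by simp
next
  case (Suc L)
  have "finite ((\<lambda>N. y N L) ` kS y L)"
    by (rule finite_subset[OF _ assms(2)[of L]]) (use assms(1) in auto)
  from pigeonhole_infinite[OF Suc this] obtain a0 where
    "infinite {N \<in> kS y L. y N L = y a0 L}" by auto
  then have "\<exists>e. infinite {N \<in> kS y L. y N L = e}" by blast
  then have "infinite {N \<in> kS y L. y N L = kz y L}"
    unfolding kz_def by (rule someI_ex)
  then show ?case by (simp add: kS_Suc)
qed

lemma kS_agree: "N \<in> kS y L \<Longrightarrow> j < L \<Longrightarrow> y N j = kz y j"
proof (induction L arbitrary: j)
  case 0 then show ?case by simp
next
  case (Suc L)
  then show ?case by (auto simp: kS_Suc less_Suc_eq)
qed




locale BV =
  fixes V :: "nat \<Rightarrow> 'v set" and E :: "nat \<Rightarrow> 'e set"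
    and s r :: "'e \<Rightarrow> 'v" and v0 :: 'v and ord :: "('e \<times> 'e) set" and k :: nat
    and Vi :: "nat \<Rightarrow> nat \<Rightarrow> 'v set" and zmax zmin :: "nat \<Rightarrow> nat \<Rightarrow> 'e"
  assumes bd: "bratteli_diagram V E s r v0"
    and od: "ordered_diagram V E r ord"
    and kso: "k_simple_ordered V E s r v0 ord k Vi zmax zmin"
begin

lemma V0: "V 0 = {v0}" using bd by (simp add: bratteli_diagram_def)
lemma finE: "finite (E n)" using bd by (simp add: bratteli_diagram_def)
lemma sE: "s ` E n = V n" using bd by (simp add: bratteli_diagram_def)
lemma rE: "r ` E n = V (Suc n)" using bd by (simp add: bratteli_diagram_def)
lemma trans_ord: "(a,b) \<in> ord \<Longrightarrow> (b,c) \<in> ord \<Longrightarrow> (a,c) \<in> ord"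
  using od unfolding ordered_diagram_def trans_def by blast
lemma irrefl_ord: "(a,a) \<notin> ord"
  using od unfolding ordered_diagram_def irrefl_def by blast
lemma total_ord: "a \<in> E n \<Longrightarrow> b \<in> E n \<Longrightarrow> r a = r b \<Longrightarrow> a \<noteq> b \<Longrightarrow> (a,b) \<in> ord \<or> (b,a) \<in> ord"
proof -
  assume a: "a \<in> E n" "b \<in> E n" "r a = r b" "a \<noteq> b"
  have "r a \<in> V (Suc n)" using a rE by blast
  then have "total_on {e \<in> E n. r e = r a} ord"
    using od unfolding ordered_diagram_def strict_linear_order_on_def by blast
  then show ?thesis using a unfolding total_on_def by auto
qed

lemmas kso_u = kso[unfolded k_simple_ordered_def]
lemma ks: "k_simple V E s r k Vi" using kso_u by (rule conjunct1)
lemma kso_z: "\<forall>i\<in>{1..k}. zmax i \<in> XB E s r \<and> zmin i \<in> XB E s r \<and>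
        (\<forall>n\<ge>1. s (zmax i n) \<in> Vi n i \<and> s (zmin i n) \<in> Vi n i)"
  using kso_u[THEN conjunct2, THEN conjunct1] .
lemma Xmax_eq: "Xmax E s r ord = zmax ` {1..k}" using kso_u[THEN conjunct2, THEN conjunct2, THEN conjunct1] .
lemma Xmin_eq: "Xmin E s r ord = zmin ` {1..k}" using kso_u[THEN conjunct2, THEN conjunct2, THEN conjunct2, THEN conjunct1] .
lemmas ks_u = ks[unfolded k_simple_def]
lemma Vi_sub: "n \<ge> 1 \<Longrightarrow> i \<in> {1..k} \<Longrightarrow> Vi n i \<subseteq> V n"
  using ks_u[THEN conjunct1] by simp
lemma Vi_disj: "n \<ge> 1 \<Longrightarrow> i \<in> {1..k} \<Longrightarrow> j \<in> {1..k} \<Longrightarrow> i \<noteq> j \<Longrightarrow> Vi n i \<inter> Vi n j = {}"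
  using ks_u[THEN conjunct2, THEN conjunct1] by simp
lemma Vi_down: "n \<ge> 1 \<Longrightarrow> i \<in> {1..k} \<Longrightarrow> v \<in> Vi (Suc n) i \<Longrightarrow> e \<in> E n \<Longrightarrow> r e = v \<Longrightarrow> s e \<in> Vi n i"
  using ks_u[THEN conjunct2, THEN conjunct2, THEN conjunct1] by blast
lemma Vi_conn: "n \<ge> 1 \<Longrightarrow> i \<in> {1..k} \<Longrightarrow> \<exists>m>n. \<forall>w\<in>Vi m i. \<forall>v\<in>Vi n i. connected_to E s r n m v w"
  using ks_u[THEN conjunct2, THEN conjunct2, THEN conjunct2] by simp

lemma zmax_XB: "i \<in> {1..k} \<Longrightarrow> zmax i \<in> XB E s r" using kso_z by blast
lemma zmin_XB: "i \<in> {1..k} \<Longrightarrow> zmin i \<in> XB E s r" using kso_z by blast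
lemma zmax_Vi: "i \<in> {1..k} \<Longrightarrow> n \<ge> 1 \<Longrightarrow> s (zmax i n) \<in> Vi n i"
  using kso_z by blast
lemma zmin_Vi: "i \<in> {1..k} \<Longrightarrow> n \<ge> 1 \<Longrightarrow> s (zmin i n) \<in> Vi n i"
  using kso_z by blast


lemma XB_E: "x \<in> XB E s r \<Longrightarrow> x n \<in> E n" by (simp add: XB_def)
lemma XB_r: "x \<in> XB E s r \<Longrightarrow> r (x n) = s (x (Suc n))" by (simp add: XB_def)
lemma XB_v0: "x \<in> XB E s r \<Longrightarrow> s (x 0) = v0"
  using XB_E[of x 0] sE[of 0] V0 by blast
lemma XB_I: "(\<And>n. x n \<in> E n) \<Longrightarrow> (\<And>n. r (x n) = s (x (Suc n))) \<Longrightarrow> x \<in> XB E s r"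
  by (simp add: XB_def)

definition ltN :: "nat \<Rightarrow> (nat \<Rightarrow> 'e) \<Rightarrow> (nat \<Rightarrow> 'e) \<Rightarrow> bool" where
  "ltN N a b \<longleftrightarrow> (\<exists>j<N. (a j, b j) \<in> ord \<and> (\<forall>i. j < i \<and> i < N \<longrightarrow> a i = b i))"

lemma ltN_trans: assumes "ltN N a b" "ltN N b c" shows "ltN N a c"
proof -
  obtain j1 where j1: "j1 < N" "(a j1, b j1) \<in> ord" "\<forall>i. j1 < i \<and> i < N \<longrightarrow> a i = b i"
    using assms(1) unfolding ltN_def by blast
  obtain j2 where j2: "j2 < N" "(b j2, c j2) \<in> ord" "\<forall>i. j2 < i \<and> i < N \<longrightarrow> b i = c i"
    using assms(2) unfolding ltN_def by blast
  show ?thesis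
  proof (cases j1 j2 rule: linorder_cases)
    case less
    then show ?thesis using j1 j2 unfolding ltN_def by (intro exI[of _ j2]) auto
  next
    case equal
    then show ?thesis using j1 j2 trans_ord unfolding ltN_def by (intro exI[of _ j2]) auto
  next
    case greater
    then show ?thesis using j1 j2 unfolding ltN_def by (intro exI[of _ j1]) auto
  qed
qed

lemma ltN_irrefl: "\<not> ltN N a a"
  using irrefl_ord unfolding ltN_def by auto

lemma ltN_asym: "ltN N a b \<Longrightarrow> ltN N b a \<Longrightarrow> False"
  using ltN_trans ltN_irrefl by blast

lemma ltN_cong: "ltN N a b \<Longrightarrow> (\<And>j. j < N \<Longrightarrow> a j = a' j) \<Longrightarrow> (\<And>j. j < N \<Longrightarrow> b j = b' j) \<Longrightarrow> ltN N a' b'"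
proof -
  assume a: "ltN N a b" and c1: "\<And>j. j < N \<Longrightarrow> a j = a' j" and c2: "\<And>j. j < N \<Longrightarrow> b j = b' j"
  obtain j where j: "j < N" "(a j, b j) \<in> ord" "\<forall>i. j < i \<and> i < N \<longrightarrow> a i = b i"
    using a unfolding ltN_def by blast
  have "(a' j, b' j) \<in> ord" using j c1 c2 by simp
  moreover have "\<forall>i. j < i \<and> i < N \<longrightarrow> a' i = b' i" using j c1 c2 by force
  ultimately show ?thesis unfolding ltN_def using j(1) by blast
qed

lemma ltN_total:
  assumes "\<exists>j<N. a j \<noteq> b j" "\<And>j. j<N \<Longrightarrow> a j \<in> E j \<and> b j \<in> E j"
    "\<And>j. j<N \<Longrightarrow> (\<forall>i. j<i \<and> i<N \<longrightarrow> a i = b i) \<Longrightarrow> r (a j) = r (b j)"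
  shows "ltN N a b \<or> ltN N b a"
proof -
  define D where "D = {j. j < N \<and> a j \<noteq> b j}"
  have fin: "finite D" "D \<noteq> {}" using assms(1) unfolding D_def by auto
  define j where "j = Max D"
  have j: "j \<in> D" using fin unfolding j_def by simp
  have above: "\<forall>i. j<i \<and> i<N \<longrightarrow> a i = b i"
  proof (intro allI impI)
    fix i assume "j < i \<and> i < N"
    then show "a i = b i"
    proof -
      assume h: "j < i \<and> i < N"
      show "a i = b i"
      proof (rule ccontr)
        assume "a i \<noteq> b i"
        then have "i \<in> D" using h unfolding D_def by auto
        then have "i \<le> j" using Max_ge[OF fin(1)] unfolding j_def by auto
        then show False using h by auto
      qed
    qed
  qed
  have "j < N" "a j \<noteq> b j" using j unfolding D_def by auto
  then have "(a j, b j) \<in> ord \<or> (b j, a j) \<in> ord"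
    using total_ord[of "a j" j "b j"] assms(2)[of j] assms(3)[OF _ above] by auto
  then show ?thesis unfolding ltN_def using above \<open>j < N\<close> by auto
qed

definition T :: "nat \<Rightarrow> (nat \<Rightarrow> 'e) \<Rightarrow> (nat \<Rightarrow> 'e) set" where
  "T N x = {y \<in> XB E s r. \<forall>n\<ge>N. y n = x n}"

lemma T_same: "y \<in> T N x \<Longrightarrow> T N y = T N x"
  unfolding T_def by auto

lemma T_total: assumes "y \<in> T N x" "z \<in> T N x" "y \<noteq> z" shows "ltN N y z \<or> ltN N z y"
proof (rule ltN_total)
  show "\<exists>j<N. y j \<noteq> z j"
  proof (rule ccontr)
    assume "\<not> ?thesis"
    then have "y = z"
    proof (intro ext)
      fix n assume h: "\<not> (\<exists>j<N. y j \<noteq> z j)"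
      show "y n = z n"
      proof (cases "n < N")
        case True then show ?thesis using h by blast
      next
        case False then show ?thesis using assms unfolding T_def by auto
      qed
    qed
    then show False using assms by simp
  qed
  show "\<And>j. j<N \<Longrightarrow> y j \<in> E j \<and> z j \<in> E j" using assms unfolding T_def by (auto simp: XB_E)
  fix j assume j: "j < N" "\<forall>i. j<i \<and> i<N \<longrightarrow> y i = z i"
  have "y (Suc j) = z (Suc j)"
  proof (cases "Suc j < N")
    case True then show ?thesis using j by auto
  next
    case False then show ?thesis using assms unfolding T_def by auto
  qed
  then show "r (y j) = r (z j)" using assms unfolding T_def by (auto simp: XB_r)
qed

lemma T_finite: "finite (T N x)"
proof -
  have inj: "inj_on (\<lambda>y. map y [0..<N]) (T N x)"
  proof
    fix y z assume yz: "y \<in> T N x" "z \<in> T N x" "map y [0..<N] = map z [0..<N]"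
    show "y = z"
    proof
      fix n show "y n = z n"
      proof (cases "n < N")
        case True then show ?thesis using yz(3) map_eq_conv[of y "[0..<N]" z] by auto
      next
        case False then show ?thesis using yz unfolding T_def by auto
      qed
    qed
  qed
  have "(\<lambda>y. map y [0..<N]) ` T N x \<subseteq> {xs. set xs \<subseteq> (\<Union>j<N. E j) \<and> length xs = N}"
    unfolding T_def using XB_E by fastforce
  moreover have "finite {xs. set xs \<subseteq> (\<Union>j<N. E j) \<and> length xs = N}"
    by (rule finite_lists_length_eq) (simp add: finE)
  ultimately show ?thesis using finite_imageD[OF _ inj] finite_subset by blast
qed

lemma x_in_T: "x \<in> XB E s r \<Longrightarrow> x \<in> T N x" unfolding T_def by auto

end



context BV
begin

abbreviation pb0 where "pb0 d u \<equiv> paths_between E s r 0 d v0 u"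
abbreviation sig where "sig \<equiv> vershik E s r v0 ord k zmax zmin"

lemma pb0_iff: "p \<in> pb0 d u \<longleftrightarrow> length p = d \<and> (\<forall>j<d. p!j \<in> E j) \<and>
   (\<forall>j. Suc j < d \<longrightarrow> r (p!j) = s (p!Suc j)) \<and>
   (if d = 0 then u = v0 else s (p!0) = v0 \<and> r (p!(d-1)) = u)"
proof (cases "d = 0")
  case True then show ?thesis unfolding paths_between_def fpaths_def by auto
next
  case False
  then show ?thesis unfolding paths_between_def fpaths_def
    by (auto simp: hd_conv_nth last_conv_nth)
qed

lemma pb_gen:
  assumes "q \<in> paths_between E s r n m u w" "n < m"
  shows "length q = m - n \<and> (\<forall>j<m-n. q!j \<in> E (n+j)) \<and> (\<forall>j. Suc j < m-n \<longrightarrow> r (q!j) = s (q!Suc j))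
     \<and> s (q!0) = u \<and> r (q!(m-n-1)) = w"
proof -
  have "q \<noteq> []" using assms unfolding paths_between_def fpaths_def by auto
  then show ?thesis using assms unfolding paths_between_def fpaths_def
    by (auto simp: hd_conv_nth last_conv_nth)
qed

lemma map_in_pb: assumes "t \<in> XB E s r" shows "map t [0..<d] \<in> pb0 d (s (t d))"
proof -
  have "d > 0 \<Longrightarrow> r (t (d-1)) = s (t d)" using XB_r[OF assms, of "d-1"] by simp
  then show ?thesis unfolding pb0_iff using assms XB_E XB_r XB_v0 by auto
qed

lemma pb_append: assumes "p \<in> pb0 d (s e)" "e \<in> E d" shows "p @ [e] \<in> pb0 (Suc d) (r e)"
proof -
  have l: "length p = d" using assms unfolding pb0_iff by simp
  have "d = 0 \<Longrightarrow> s e = v0" using assms(2) sE[of 0] V0 by blast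
  then show ?thesis using assms unfolding pb0_iff
    by (auto simp: nth_append l less_Suc_eq not_less)
qed

lemma reach: "u \<in> V d \<Longrightarrow> \<exists>p. p \<in> pb0 d u"
proof (induction d arbitrary: u)
  case 0 then show ?case using V0 unfolding pb0_iff by (intro exI[of _ "[]"]) auto
next
  case (Suc d)
  obtain e where e: "e \<in> E d" "r e = u" using Suc.prems rE[of d] by (metis imageE)
  have "s e \<in> V d" using e sE by blast
  then obtain p where "p \<in> pb0 d (s e)" using Suc.IH by blast
  then show ?case using pb_append e by blast
qed

lemma splice0:
  assumes g: "g \<in> pb0 m (s (x m))" and x: "x \<in> XB E s r"
  shows "(\<lambda>j. if j < m then g!j else x j) \<in> XB E s r"
proof (rule XB_I)
  fix n
  show "(if n < m then g!n else x n) \<in> E n" using g x XB_E unfolding pb0_iff by auto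
  show "r (if n < m then g!n else x n) = s (if Suc n < m then g!Suc n else x (Suc n))"
  proof -
    consider "Suc n < m" | "Suc n = m" | "m \<le> n" by linarith
    then show ?thesis
    proof cases
      case 1 then show ?thesis using g unfolding pb0_iff by auto
    next
      case 2 then have "n = m - 1" "m \<noteq> 0" by auto
      then show ?thesis using g 2 unfolding pb0_iff by auto
    next
      case 3 then show ?thesis using x XB_r by auto
    qed
  qed
qed

lemma lexless_ltN: "lexless ord p q \<longleftrightarrow> length p = length q \<and> ltN (length p) (nth p) (nth q)"
  unfolding lexless_def ltN_def by auto

lemma pb_finite: "finite (pb0 d u)"
proof -
  have "pb0 d u \<subseteq> {xs. set xs \<subseteq> (\<Union>j<d. E j) \<and> length xs = d}"
  proof
    fix p assume "p \<in> pb0 d u"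
    then have "length p = d" "\<forall>j<d. p!j \<in> E j" unfolding pb0_iff by auto
    then show "p \<in> {xs. set xs \<subseteq> (\<Union>j<d. E j) \<and> length xs = d}"
      by (auto simp: in_set_conv_nth) blast
  qed
  moreover have "finite {xs. set xs \<subseteq> (\<Union>j<d. E j) \<and> length xs = d}"
    by (rule finite_lists_length_eq) (simp add: finE)
  ultimately show ?thesis by (rule finite_subset)
qed

lemma pb_total: assumes "p \<in> pb0 d u" "q \<in> pb0 d u" "p \<noteq> q"
  shows "lexless ord p q \<or> lexless ord q p"
proof -
  have lp: "length p = d" "length q = d" using assms unfolding pb0_iff by auto
  have "ltN d (nth p) (nth q) \<or> ltN d (nth q) (nth p)"
  proof (rule ltN_total)
    show "\<exists>j<d. p ! j \<noteq> q ! j" using assms(3) lp nth_equalityI by metis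
    show "\<And>j. j < d \<Longrightarrow> p ! j \<in> E j \<and> q ! j \<in> E j" using assms unfolding pb0_iff by auto
    fix j assume j: "j < d" "\<forall>i. j < i \<and> i < d \<longrightarrow> p ! i = q ! i"
    show "r (p ! j) = r (q ! j)"
    proof (cases "Suc j < d")
      case True then show ?thesis using j assms unfolding pb0_iff by auto
    next
      case False then have "j = d - 1" "d \<noteq> 0" using j by auto
      then show ?thesis using assms unfolding pb0_iff by auto
    qed
  qed
  then show ?thesis unfolding lexless_ltN using lp by auto
qed

lemma minpath: assumes "u \<in> V d"
  shows "is_min_in ord (pb0 d u) (THE f. is_min_in ord (pb0 d u) f)"
proof -
  obtain p0 where "p0 \<in> pb0 d u" using reach assms by blast
  then have ne: "pb0 d u \<noteq> {}" by auto
  have "\<exists>m\<in>pb0 d u. \<forall>a\<in>pb0 d u. a \<noteq> m \<longrightarrow> lexless ord m a"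
  proof (rule finite_linear_min[OF pb_finite ne])
    show "\<And>a b c. lexless ord a b \<Longrightarrow> lexless ord b c \<Longrightarrow> lexless ord a c"
    proof -
      fix a b c assume h: "lexless ord a b" "lexless ord b c"
      then have "length a = length b" "length b = length c" "ltN (length a) (nth a) (nth b)"
        "ltN (length a) (nth b) (nth c)" unfolding lexless_ltN by auto
      then show "lexless ord a c" unfolding lexless_ltN using ltN_trans by simp
    qed
    show "\<And>a b. a \<in> pb0 d u \<Longrightarrow> b \<in> pb0 d u \<Longrightarrow> a \<noteq> b \<Longrightarrow> lexless ord a b \<or> lexless ord b a"
      by (rule pb_total)
  qed
  then obtain m where m: "is_min_in ord (pb0 d u) m" unfolding is_min_in_def by blast
  have "\<And>m'. is_min_in ord (pb0 d u) m' \<Longrightarrow> m' = m"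
  proof (rule ccontr)
    fix m' assume "is_min_in ord (pb0 d u) m'" "m' \<noteq> m"
    then have "lexless ord m m'" "lexless ord m' m" using m unfolding is_min_in_def by auto
    then have "ltN (length m) (nth m) (nth m')" "ltN (length m) (nth m') (nth m)"
      unfolding lexless_ltN by auto
    then show False by (rule ltN_asym)
  qed
  then have "(THE f. is_min_in ord (pb0 d u) f) = m" using m by (intro the_equality)
  then show ?thesis using m by simp
qed

lemma esucc_props:
  assumes "x \<in> E d" "\<not> emax E r ord d x"
  defines "e' \<equiv> esucc E r ord d x"
  shows "e' \<in> E d \<and> r e' = r x \<and> (x, e') \<in> ord \<and>
      (\<forall>e''\<in>E d. r e'' = r x \<and> (x, e'') \<in> ord \<longrightarrow> e'' = e' \<or> (e', e'') \<in> ord)"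
proof -
  define C where "C = {e \<in> E d. r e = r x \<and> (x, e) \<in> ord}"
  have ne: "C \<noteq> {}" using assms unfolding C_def emax_def by auto
  have fin: "finite C" unfolding C_def using finE by auto
  have "\<exists>m\<in>C. \<forall>a\<in>C. a \<noteq> m \<longrightarrow> (m, a) \<in> ord"
  proof (rule finite_linear_min[OF fin ne])
    show "\<And>a b c. (a, b) \<in> ord \<Longrightarrow> (b, c) \<in> ord \<Longrightarrow> (a, c) \<in> ord" by (rule trans_ord)
    show "\<And>a b. a \<in> C \<Longrightarrow> b \<in> C \<Longrightarrow> a \<noteq> b \<Longrightarrow> (a, b) \<in> ord \<or> (b, a) \<in> ord"
    proof -
      fix a b assume h: "a \<in> C" "b \<in> C" "a \<noteq> b"
      then have "a \<in> E d" "b \<in> E d" "r a = r b" unfolding C_def by auto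
      then show "(a, b) \<in> ord \<or> (b, a) \<in> ord" using total_ord h(3) by blast
    qed
  qed
  then obtain m where m: "m \<in> C" "\<forall>a\<in>C. a \<noteq> m \<longrightarrow> (m, a) \<in> ord" by blast
  let ?Q = "\<lambda>e'. e' \<in> E d \<and> r e' = r x \<and> (x, e') \<in> ord \<and>
      (\<forall>e''\<in>E d. r e'' = r x \<and> (x, e'') \<in> ord \<longrightarrow> e'' = e' \<or> (e', e'') \<in> ord)"
  have Qm: "?Q m" using m unfolding C_def by auto
  have "\<And>e. ?Q e \<Longrightarrow> e = m"
  proof (rule ccontr)
    fix e assume "?Q e" "e \<noteq> m"
    then have "(e, m) \<in> ord" "(m, e) \<in> ord" using Qm by auto
    then have "(e, e) \<in> ord" by (rule trans_ord)
    then show False using irrefl_ord by blast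
  qed
  then have "(THE e. ?Q e) = m" using Qm by (intro the_equality)
  then show ?thesis using Qm unfolding e'_def esucc_def by simp
qed

end



context BV
begin

lemma not_zmax: assumes "\<not> emax E r ord j (x j)" shows "\<not> (\<exists>i\<in>{1..k}. x = zmax i)"
proof
  assume "\<exists>i\<in>{1..k}. x = zmax i"
  then have "x \<in> Xmax E s r ord" using Xmax_eq by auto
  then show False using assms unfolding Xmax_def by auto
qed

lemma succ:
  assumes x: "x \<in> XB E s r" and nm: "\<not> emax E r ord j (x j)"
  obtains d where "\<forall>i<d. emax E r ord i (x i)" "d \<le> j" "sig x \<in> XB E s r"
    "\<forall>n>d. sig x n = x n" "(x d, sig x d) \<in> ord" "sig x d \<in> E d" "r (sig x d) = r (x d)"
    "\<forall>e''\<in>E d. r e'' = r (x d) \<and> (x d, e'') \<in> ord \<longrightarrow> e'' = sig x d \<or> (sig x d, e'') \<in> ord"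
    "\<forall>t\<in>XB E s r. (\<forall>n\<ge>d. t n = sig x n) \<longrightarrow> t \<noteq> sig x \<longrightarrow> ltN d (sig x) t"
proof -
  define d where "d = (LEAST d. \<not> emax E r ord d (x d))"
  have nd: "\<not> emax E r ord d (x d)" unfolding d_def using nm by (rule LeastI)
  have dj: "d \<le> j" unfolding d_def using nm by (rule Least_le)
  have below: "\<forall>i<d. emax E r ord i (x i)" unfolding d_def using not_less_Least by blast
  define e' where "e' = esucc E r ord d (x d)"
  have ep: "e' \<in> E d \<and> r e' = r (x d) \<and> (x d, e') \<in> ord \<and>
      (\<forall>e''\<in>E d. r e'' = r (x d) \<and> (x d, e'') \<in> ord \<longrightarrow> e'' = e' \<or> (e', e'') \<in> ord)"
    unfolding e'_def using esucc_props[OF XB_E[OF x] nd] by simp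
  define u where "u = s e'"
  have uV: "u \<in> V d" unfolding u_def using ep sE by blast
  define f where "f = (THE f. is_min_in ord (pb0 d u) f)"
  have fmin: "is_min_in ord (pb0 d u) f" unfolding f_def by (rule minpath[OF uV])
  have sx: "sig x = (\<lambda>j. if j < d then f!j else if j = d then e' else x j)"
    using not_zmax[of j x, OF nm] unfolding vershik_def Let_def d_def[symmetric] e'_def[symmetric]
      u_def[symmetric] f_def[symmetric] by simp
  have fpb: "f \<in> pb0 d u" using fmin unfolding is_min_in_def by simp
  have lf: "length f = d" using fpb unfolding pb0_iff by simp
  have g: "f @ [e'] \<in> pb0 (Suc d) (s (x (Suc d)))"
    using pb_append[of f d e'] fpb ep XB_r[OF x, of d] unfolding u_def by simp
  have sx2: "sig x = (\<lambda>j. if j < Suc d then (f @ [e'])!j else x j)"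
    unfolding sx by (auto simp: nth_append lf)
  have sXB: "sig x \<in> XB E s r" unfolding sx2 by (rule splice0[OF g x])
  have above: "\<forall>n>d. sig x n = x n" unfolding sx by simp
  have atd: "sig x d = e'" unfolding sx by simp
  have minp: "\<forall>t\<in>XB E s r. (\<forall>n\<ge>d. t n = sig x n) \<longrightarrow> t \<noteq> sig x \<longrightarrow> ltN d (sig x) t"
  proof (intro ballI impI)
    fix t assume t: "t \<in> XB E s r" "\<forall>n\<ge>d. t n = sig x n" "t \<noteq> sig x"
    have tpb: "map t [0..<d] \<in> pb0 d u" using map_in_pb[OF t(1), of d] t(2) atd unfolding u_def by simp
    have "map t [0..<d] \<noteq> f"
    proof
      assume h: "map t [0..<d] = f"
      have "t = sig x"
      proof
        fix n show "t n = sig x n"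
        proof (cases "n < d")
          case True
          then have "t n = f ! n" using h[symmetric] by simp
          then show ?thesis using True unfolding sx by simp
        next
          case False then show ?thesis using t(2) by simp
        qed
      qed
      then show False using t(3) by simp
    qed
    then have "lexless ord f (map t [0..<d])" using fmin tpb unfolding is_min_in_def by auto
    then have "ltN d (nth f) (nth (map t [0..<d]))" unfolding lexless_ltN lf by simp
    then show "ltN d (sig x) t" by (rule ltN_cong) (simp_all add: sx)
  qed
  show ?thesis
    apply (rule that[OF below dj sXB above])
    using ep minp atd by simp_all
qed

lemma succ_T:
  assumes x: "x \<in> XB E s r" and j: "j < N" and nm: "\<not> emax E r ord j (x j)"
  shows "sig x \<in> T N x" "ltN N x (sig x)" "\<And>t. t \<in> T N x \<Longrightarrow> ltN N x t \<Longrightarrow> ltN N t (sig x) \<Longrightarrow> False"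
proof -
  obtain d where d: "\<forall>i<d. emax E r ord i (x i)" "d \<le> j" "sig x \<in> XB E s r"
    "\<forall>n>d. sig x n = x n" "(x d, sig x d) \<in> ord" "sig x d \<in> E d" "r (sig x d) = r (x d)"
    "\<forall>e''\<in>E d. r e'' = r (x d) \<and> (x d, e'') \<in> ord \<longrightarrow> e'' = sig x d \<or> (sig x d, e'') \<in> ord"
    "\<forall>t\<in>XB E s r. (\<forall>n\<ge>d. t n = sig x n) \<longrightarrow> t \<noteq> sig x \<longrightarrow> ltN d (sig x) t"
    using succ[OF x nm] by blast
  have dN: "d < N" using d(2) j by simp
  show "sig x \<in> T N x" unfolding T_def using d(3,4) dN by auto
  show "ltN N x (sig x)" unfolding ltN_def using d(4,5) dN by auto
  fix t assume t: "t \<in> T N x" "ltN N x t" "ltN N t (sig x)"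
  obtain j1 where j1: "j1 < N" "(x j1, t j1) \<in> ord" "\<forall>i. j1 < i \<and> i < N \<longrightarrow> x i = t i"
    using t(2) unfolding ltN_def by blast
  have tXB: "t \<in> XB E s r" and tN: "\<forall>n\<ge>N. t n = x n" using t(1) unfolding T_def by auto
  have tx_above: "\<forall>i>j1. t i = x i" using j1(3) tN by (metis not_le)
  have rr: "r (t j1) = r (x j1)"
    using XB_r[OF tXB, of j1] XB_r[OF x, of j1] tx_above by simp
  consider "j1 < d" | "j1 = d" | "d < j1" by linarith
  then show False
  proof cases
    case 1
    then have "emax E r ord j1 (x j1)" using d(1) by simp
    then show False using j1(2) rr XB_E[OF tXB, of j1] unfolding emax_def by auto
  next
    case 2
    have "t d = sig x d \<or> (sig x d, t d) \<in> ord"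
      using d(8) XB_E[OF tXB, of d] rr j1(2) 2 by auto
    then show False
    proof
      assume td: "t d = sig x d"
      have agree: "\<forall>n\<ge>d. t n = sig x n"
      proof (intro allI impI)
        fix n assume "d \<le> n"
        then consider "n = d" | "n > d" by linarith
        then show "t n = sig x n"
        proof cases
          case 1 then show ?thesis using td by simp
        next
          case 2 then show ?thesis using tx_above d(4) \<open>j1 = d\<close> by simp
        qed
      qed
      show False
      proof (cases "t = sig x")
        case True then show False using t(3) ltN_irrefl by simp
      next
        case False
        then have "ltN d (sig x) t" using d(9) tXB agree by blast
        then obtain jj where jj: "jj < d" "(sig x jj, t jj) \<in> ord" "\<forall>i. jj < i \<and> i < d \<longrightarrow> sig x i = t i"
          unfolding ltN_def by blast
        have "\<forall>i. jj < i \<and> i < N \<longrightarrow> sig x i = t i"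
        proof (intro allI impI)
          fix i assume "jj < i \<and> i < N"
          then show "sig x i = t i" using jj(3) agree by (cases "i < d") auto
        qed
        then have "ltN N (sig x) t" unfolding ltN_def using jj dN by (intro exI[of _ jj]) auto
        then show False using t(3) ltN_asym by blast
      qed
    next
      assume "(sig x d, t d) \<in> ord"
      then have "ltN N (sig x) t" unfolding ltN_def using dN d(4) tx_above \<open>j1 = d\<close>
        by (intro exI[of _ d]) auto
      then show False using t(3) ltN_asym by blast
    qed
  next
    case 3
    have "ltN N (sig x) t" unfolding ltN_def using j1 d(4) 3
      by (intro exI[of _ j1]) auto
    then show False using t(3) ltN_asym by blast
  qed
qed

lemma orbit:
  assumes "x \<in> XB E s r" "y \<in> T N x" "y = x \<or> ltN N x y"
  shows "\<exists>j. (sig ^^ j) x = y"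
  using assms
proof (induction "card {z \<in> T N x. ltN N x z}" arbitrary: x rule: less_induct)
  case less
  show ?case
  proof (cases "y = x")
    case True then show ?thesis by (intro exI[of _ 0]) simp
  next
    case False
    then have lt: "ltN N x y" using less.prems by simp
    then obtain j where j: "j < N" "(x j, y j) \<in> ord" "\<forall>i. j < i \<and> i < N \<longrightarrow> x i = y i"
      unfolding ltN_def by blast
    have yXB: "y \<in> XB E s r" and yN: "\<forall>n\<ge>N. y n = x n" using less.prems(2) unfolding T_def by auto
    have "y (Suc j) = x (Suc j)" using j(3) yN by (cases "Suc j < N") auto
    then have "r (y j) = r (x j)" using XB_r[OF yXB, of j] XB_r[OF less.prems(1), of j] by simp
    then have nm: "\<not> emax E r ord j (x j)" using j(2) XB_E[OF yXB, of j] unfolding emax_def by auto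
    note st = succ_T[OF less.prems(1) j(1) nm]
    have TT: "T N (sig x) = T N x" by (rule T_same[OF st(1)])
    have sXB: "sig x \<in> XB E s r" using st(1) unfolding T_def by simp
    have y2: "y = sig x \<or> ltN N (sig x) y"
    proof (cases "y = sig x")
      case False
      then have "ltN N y (sig x) \<or> ltN N (sig x) y" using T_total[OF less.prems(2) st(1)] by blast
      then show ?thesis using st(3)[OF less.prems(2) lt] by blast
    qed simp
    have sub: "{z \<in> T N (sig x). ltN N (sig x) z} \<subseteq> {z \<in> T N x. ltN N x z} - {sig x}"
      using TT ltN_trans[OF st(2)] ltN_irrefl by auto
    have "card {z \<in> T N (sig x). ltN N (sig x) z} < card {z \<in> T N x. ltN N x z}"
    proof -
      have fin: "finite {z \<in> T N x. ltN N x z}" using T_finite by simp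
      have "sig x \<in> {z \<in> T N x. ltN N x z}" using st(1,2) by simp
      then have "card ({z \<in> T N x. ltN N x z} - {sig x}) < card {z \<in> T N x. ltN N x z}"
        by (rule card_Diff1_less[OF fin])
      moreover have "card {z \<in> T N (sig x). ltN N (sig x) z} \<le> card ({z \<in> T N x. ltN N x z} - {sig x})"
        using sub fin by (intro card_mono) auto
      ultimately show ?thesis by simp
    qed
    then obtain i where "(sig ^^ i) (sig x) = y"
      using less.hyps[OF _ sXB _ y2] less.prems(2) TT by blast
    then have "(sig ^^ Suc i) x = y" by (simp add: funpow_Suc_right del: funpow.simps)
    then show ?thesis by blast
  qed
qed

lemma reach_max:
  assumes x: "x \<in> XB E s r"
  shows "\<exists>y. (\<exists>j. (sig ^^ j) x = y) \<and> y \<in> XB E s r \<and> (\<forall>j<N. emax E r ord j (y j))"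
proof -
  have ne: "T N x \<noteq> {}" using x_in_T[OF x] by auto
  have "\<exists>m\<in>T N x. \<forall>a\<in>T N x. a \<noteq> m \<longrightarrow> ltN N a m"
  proof (rule finite_linear_min[OF T_finite ne, where P = "\<lambda>a b. ltN N b a"])
    show "\<And>a b c. ltN N b a \<Longrightarrow> ltN N c b \<Longrightarrow> ltN N c a" using ltN_trans by blast
    show "\<And>a b. a \<in> T N x \<Longrightarrow> b \<in> T N x \<Longrightarrow> a \<noteq> b \<Longrightarrow> ltN N b a \<or> ltN N a b"
      using T_total by blast
  qed
  then obtain m where m: "m \<in> T N x" "\<forall>a\<in>T N x. a \<noteq> m \<longrightarrow> ltN N a m" by blast
  have mXB: "m \<in> XB E s r" using m(1) unfolding T_def by simp
  have "\<forall>j<N. emax E r ord j (m j)"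
  proof (intro allI impI, rule ccontr)
    fix j assume "j < N" "\<not> emax E r ord j (m j)"
    note st = succ_T[OF mXB this]
    have "sig m \<in> T N x" using st(1) T_same[OF m(1)] by simp
    moreover have "sig m \<noteq> m" using st(2) ltN_irrefl by auto
    ultimately have "ltN N (sig m) m" using m(2) by blast
    then show False using st(2) ltN_asym by blast
  qed
  moreover have "m = x \<or> ltN N x m"
  proof (cases "m = x")
    case False then show ?thesis using m(2) x_in_T[OF x, of N] by auto
  qed simp
  then have "\<exists>j. (sig ^^ j) x = m" by (rule orbit[OF x m(1)])
  ultimately show ?thesis using mXB by blast
qed


end



context BV
begin

abbreviation TT where "TT \<equiv> XB_topology E s r"

lemma topspace_XB: "topspace TT = XB E s r"
proof -
  have "\<Union>(cylinders E s r) = XB E s r"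
  proof
    show "\<Union>(cylinders E s r) \<subseteq> XB E s r" unfolding cylinders_def by auto
    have "XB E s r \<in> cylinders E s r" unfolding cylinders_def by (intro CollectI exI[of _ "[]"]) simp
    then show "XB E s r \<subseteq> \<Union>(cylinders E s r)" by blast
  qed
  then show ?thesis unfolding XB_topology_def topology_generated_by_topspace by simp
qed

lemma cyl_open: "openin TT {y \<in> XB E s r. \<forall>j<L. y j = z j}"
proof -
  define c where "c = map z [0..<L]"
  have eq: "{y \<in> XB E s r. \<forall>j<L. y j = z j} = {x \<in> XB E s r. \<forall>j<length c. x j = c!j}"
    unfolding c_def by simp
  have "{x \<in> XB E s r. \<forall>j<length c. x j = c!j} \<in> cylinders E s r"
    unfolding cylinders_def by (rule CollectI, rule exI[of _ c]) simp
  then show ?thesis unfolding eq XB_topology_def by (rule topology_generated_by_Basis)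
qed

lemma open_cyl:
  assumes "openin TT U" "z \<in> U"
  shows "\<exists>L. {y \<in> XB E s r. \<forall>j<L. y j = z j} \<subseteq> U"
proof -
  have "generate_topology_on (cylinders E s r) U"
    using assms(1) unfolding XB_topology_def by (rule openin_topology_generated_by)
  then show ?thesis using assms(2)
  proof (induction rule: generate_topology_on.induct)
    case Empty then show ?case by simp
  next
    case (Int a b)
    have za: "z \<in> a" and zb: "z \<in> b" using Int.prems by auto
    obtain L1 where L1: "{y \<in> XB E s r. \<forall>j<L1. y j = z j} \<subseteq> a" using Int.IH(1)[OF za] by blast
    obtain L2 where L2: "{y \<in> XB E s r. \<forall>j<L2. y j = z j} \<subseteq> b" using Int.IH(2)[OF zb] by blast
    have "{y \<in> XB E s r. \<forall>j<max L1 L2. y j = z j} \<subseteq> a \<inter> b"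
    proof
      fix y assume y: "y \<in> {y \<in> XB E s r. \<forall>j<max L1 L2. y j = z j}"
      then have "y \<in> {y \<in> XB E s r. \<forall>j<L1. y j = z j}" "y \<in> {y \<in> XB E s r. \<forall>j<L2. y j = z j}"
        by auto
      then show "y \<in> a \<inter> b" using L1 L2 by blast
    qed
    then show ?case by blast
  next
    case (UN K)
    then obtain U where U: "U \<in> K" "z \<in> U" by auto
    obtain L where "{y \<in> XB E s r. \<forall>j<L. y j = z j} \<subseteq> U" using UN.IH[OF U] by blast
    then show ?case using U(1) by blast
  next
    case (Basis c)
    then obtain cl where c: "c = {x \<in> XB E s r. \<forall>j<length cl. x j = cl!j}" unfolding cylinders_def by blast
    have "{y \<in> XB E s r. \<forall>j<length cl. y j = z j} \<subseteq> c"
      using Basis.prems unfolding c by auto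
    then show ?case by blast
  qed
qed

lemma closed_lim:
  assumes "closedin TT B" "z \<in> XB E s r" "\<forall>L. \<exists>y\<in>B. \<forall>j<L. y j = z j"
  shows "z \<in> B"
proof (rule ccontr)
  assume nz: "z \<notin> B"
  have Bsub: "B \<subseteq> XB E s r" using closedin_subset[OF assms(1)] topspace_XB by simp
  have op: "openin TT (XB E s r - B)" using assms(1) unfolding closedin_def topspace_XB by simp
  have "z \<in> XB E s r - B" using nz assms(2) by simp
  then obtain L where L: "{y \<in> XB E s r. \<forall>j<L. y j = z j} \<subseteq> XB E s r - B"
    using open_cyl[OF op] by blast
  obtain y where y: "y \<in> B" "\<forall>j<L. y j = z j" using assms(3) by blast
  then have "y \<in> {y \<in> XB E s r. \<forall>j<L. y j = z j}" using Bsub by auto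
  then show False using L y(1) by blast
qed

lemma konig:
  assumes "\<And>N. y N \<in> XB E s r" "\<And>N j. j < N \<Longrightarrow> emax E r ord j (y N j)"
  shows "\<exists>z\<in>Xmax E s r ord. \<forall>L. \<exists>N. \<forall>j<L. y N j = z j"
proof -
  have inf: "infinite (kS y L)" for L
    by (rule kS_infinite[where F = E]) (use assms(1) XB_E finE in auto)
  have lev: "kz y L \<in> E L \<and> r (kz y L) = s (kz y (Suc L)) \<and> emax E r ord L (kz y L)" for L
  proof -
    obtain N where N: "N > Suc L" "N \<in> kS y (Suc (Suc L))"
      using inf[of "Suc (Suc L)"] unfolding infinite_nat_iff_unbounded by blast
    have "y N L = kz y L" "y N (Suc L) = kz y (Suc L)" using kS_agree[OF N(2)] by auto
    then show ?thesis using XB_E[OF assms(1)[of N], of L] XB_r[OF assms(1)[of N], of L]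
      assms(2)[of L N] N(1) by auto
  qed
  have "kz y \<in> Xmax E s r ord" unfolding Xmax_def XB_def using lev by auto
  moreover have "\<forall>L. \<exists>N. \<forall>j<L. y N j = kz y j"
  proof
    fix L
    obtain N where "N \<in> kS y L" using inf[of L] by (metis finite.emptyI ex_in_conv)
    then show "\<exists>N. \<forall>j<L. y N j = kz y j" using kS_agree by blast
  qed
  ultimately show ?thesis by blast
qed

definition Xi :: "nat \<Rightarrow> (nat \<Rightarrow> 'e) set" where
  "Xi i = {x \<in> XB E s r. \<forall>n\<ge>1. s (x n) \<in> Vi n i}"

lemma down:
  assumes "y \<in> XB E s r" "i \<in> {1..k}"
  shows "m \<ge> 1 \<Longrightarrow> s (y m) \<in> Vi m i \<Longrightarrow> 1 \<le> n \<Longrightarrow> n \<le> m \<Longrightarrow> s (y n) \<in> Vi n i"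
proof (induction m arbitrary: n)
  case 0 then show ?case by simp
next
  case (Suc m)
  show ?case
  proof (cases "n = Suc m")
    case True then show ?thesis using Suc.prems by simp
  next
    case False
    then have nm: "n \<le> m" "m \<ge> 1" using Suc.prems by auto
    have "s (y m) \<in> Vi m i"
      using Vi_down[OF nm(2) assms(2) Suc.prems(2) XB_E[OF assms(1), of m] XB_r[OF assms(1), of m]] .
    then show ?thesis using Suc.IH[OF nm(2) _ Suc.prems(3) nm(1)] by simp
  qed
qed

lemma Xi_sub: "Xi i \<subseteq> XB E s r" unfolding Xi_def by auto

lemma Xi_closed: "closedin TT (Xi i)"
  unfolding closedin_def topspace_XB
proof
  show "Xi i \<subseteq> XB E s r" by (rule Xi_sub)
  show "openin TT (XB E s r - Xi i)"
  proof (subst openin_subopen, intro ballI)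
    fix y assume y: "y \<in> XB E s r - Xi i"
    then obtain n where n: "n \<ge> 1" "s (y n) \<notin> Vi n i" unfolding Xi_def by auto
    let ?C = "{x \<in> XB E s r. \<forall>j<Suc n. x j = y j}"
    have "?C \<subseteq> XB E s r - Xi i" using n unfolding Xi_def by auto
    moreover have "y \<in> ?C" using y by auto
    ultimately show "\<exists>T. openin TT T \<and> y \<in> T \<and> T \<subseteq> XB E s r - Xi i" using cyl_open by blast
  qed
qed

lemma zmax_Xi: "i \<in> {1..k} \<Longrightarrow> zmax i \<in> Xi i" unfolding Xi_def using zmax_XB zmax_Vi by auto
lemma zmin_Xi: "i \<in> {1..k} \<Longrightarrow> zmin i \<in> Xi i" unfolding Xi_def using zmin_XB zmin_Vi by auto
lemma Xi_disj: "i \<in> {1..k} \<Longrightarrow> j \<in> {1..k} \<Longrightarrow> x \<in> Xi i \<Longrightarrow> x \<in> Xi j \<Longrightarrow> i = j"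
  unfolding Xi_def using Vi_disj[of 1 i j] by auto

lemma sig_zmax: assumes "i \<in> {1..k}" shows "sig (zmax i) = zmin i"
proof -
  have ex: "\<exists>j. j \<in> {1..k} \<and> zmax i = zmax j" using assms by blast
  define j where "j = (SOME j. j \<in> {1..k} \<and> zmax i = zmax j)"
  have j: "j \<in> {1..k}" "zmax i = zmax j" unfolding j_def using someI_ex[OF ex] by auto
  have "i = j" using Xi_disj[OF assms j(1) zmax_Xi[OF assms]] zmax_Xi[OF j(1)] j(2) by simp
  then show ?thesis unfolding vershik_def using assms j_def by auto
qed

lemma sig_Xi: assumes i: "i \<in> {1..k}" and x: "x \<in> Xi i" shows "sig x \<in> Xi i"
proof (cases "\<exists>j\<in>{1..k}. x = zmax j")
  case True
  then obtain j where j: "j \<in> {1..k}" "x = zmax j" by blast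
  then have "i = j" using Xi_disj[OF i j(1) x] zmax_Xi by simp
  then show ?thesis using sig_zmax j zmin_Xi by simp
next
  case False
  have xXB: "x \<in> XB E s r" using x Xi_sub by auto
  have "x \<notin> Xmax E s r ord" using False Xmax_eq by auto
  then obtain j where nm: "\<not> emax E r ord j (x j)" using xXB unfolding Xmax_def by auto
  obtain d where d: "sig x \<in> XB E s r" "\<forall>n>d. sig x n = x n"
    using succ[OF xXB nm] by metis
  have xs: "\<forall>n\<ge>1. s (x n) \<in> Vi n i" using x unfolding Xi_def by simp
  have "\<forall>n\<ge>1. s (sig x n) \<in> Vi n i"
  proof (intro allI impI)
    fix n :: nat assume n: "1 \<le> n"
    show "s (sig x n) \<in> Vi n i"
    proof (cases "n > d")
      case True then show ?thesis using d xs n by simp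
    next
      case False
      have "s (sig x (Suc d)) \<in> Vi (Suc d) i" using d(2) xs by simp
      then show ?thesis using down[OF d(1) i, of "Suc d" n] n False by simp
    qed
  qed
  then show ?thesis using d(1) unfolding Xi_def by simp
qed

lemma funpow_Xi: "i \<in> {1..k} \<Longrightarrow> x \<in> Xi i \<Longrightarrow> (sig ^^ j) x \<in> Xi i"
  by (induction j) (auto intro: sig_Xi)

lemma Xi_surj: assumes i: "i \<in> {1..k}" shows "Xi i \<subseteq> sig ` Xi i"
proof
  fix y assume y: "y \<in> Xi i"
  have yXB: "y \<in> XB E s r" using y Xi_sub by auto
  show "y \<in> sig ` Xi i"
  proof (cases "y = zmin i")
    case True then show ?thesis using sig_zmax[OF i] zmax_Xi[OF i] by force
  next
    case False
    have "y \<notin> Xmin E s r ord"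
    proof
      assume "y \<in> Xmin E s r ord"
      then obtain j where j: "j \<in> {1..k}" "y = zmin j" using Xmin_eq by auto
      then have "i = j" using Xi_disj[OF i j(1) y] zmin_Xi by simp
      then show False using False j by simp
    qed
    then obtain d where "\<not> emin E r ord d (y d)" using yXB unfolding Xmin_def by auto
    then obtain e where e: "e \<in> E d" "r e = r (y d)" "(e, y d) \<in> ord"
      using XB_E[OF yXB] unfolding emin_def by auto
    have "s e \<in> V d" using e sE by blast
    then obtain p where p: "p \<in> pb0 d (s e)" using reach by blast
    have lp: "length p = d" using p unfolding pb0_iff by simp
    have g: "p @ [e] \<in> pb0 (Suc d) (s (y (Suc d)))"
      using pb_append[OF p e(1)] e(2) XB_r[OF yXB] by simp
    define y' where "y' = (\<lambda>j. if j < Suc d then (p @ [e])!j else y j)"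
    have y'XB: "y' \<in> XB E s r" unfolding y'_def by (rule splice0[OF g yXB])
    have y'd: "y' d = e" unfolding y'_def by (simp add: nth_append lp)
    have y'T: "y \<in> T (Suc d) y'" unfolding T_def y'_def using yXB by auto
    have lt: "ltN (Suc d) y' y" unfolding ltN_def using e(3) y'd
      by (intro exI[of _ d]) auto
    obtain j where j: "(sig ^^ j) y' = y" using orbit[OF y'XB y'T] lt by blast
    have "j \<noteq> 0"
    proof
      assume "j = 0"
      then have "y' = y" using j by simp
      then show False using y'd e(3) irrefl_ord by simp
    qed
    then obtain j' where j': "j = Suc j'" by (cases j) auto
    have y'Xi: "y' \<in> Xi i"
    proof -
      have ys: "\<forall>n\<ge>1. s (y n) \<in> Vi n i" using y unfolding Xi_def by simp
      have "\<forall>n\<ge>1. s (y' n) \<in> Vi n i"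
      proof (intro allI impI)
        fix n :: nat assume n: "1 \<le> n"
        show "s (y' n) \<in> Vi n i"
        proof (cases "n > d")
          case True then show ?thesis using ys n unfolding y'_def by simp
        next
          case False
          have "s (y' (Suc d)) \<in> Vi (Suc d) i" using ys unfolding y'_def by simp
          then show ?thesis using down[OF y'XB i, of "Suc d" n] n False by simp
        qed
      qed
      then show ?thesis using y'XB unfolding Xi_def by simp
    qed
    have "sig ((sig ^^ j') y') = y" using j j' by simp
    then show ?thesis using funpow_Xi[OF i y'Xi, of j'] by blast
  qed
qed

lemma orbit_in: "sig ` B \<subseteq> B \<Longrightarrow> x \<in> B \<Longrightarrow> (sig ^^ j) x \<in> B"
  by (induction j) auto

lemma LemA:
  assumes B: "closedin TT B" "sig ` B \<subseteq> B" and x: "x \<in> B"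
  shows "\<exists>i\<in>{1..k}. zmax i \<in> B"
proof -
  have Bsub: "B \<subseteq> XB E s r" using closedin_subset[OF B(1)] topspace_XB by simp
  have xXB: "x \<in> XB E s r" using x Bsub by auto
  define P where "P = (\<lambda>N y. (\<exists>j. (sig ^^ j) x = y) \<and> y \<in> XB E s r \<and> (\<forall>j<N. emax E r ord j (y j)))"
  define Y where "Y = (\<lambda>N. SOME y. P N y)"
  have PY: "P N (Y N)" for N unfolding Y_def using reach_max[OF xXB, of N] unfolding P_def
    by (rule someI_ex)
  have "\<exists>z\<in>Xmax E s r ord. \<forall>L. \<exists>N. \<forall>j<L. Y N j = z j"
    by (rule konig) (use PY in \<open>auto simp: P_def\<close>)
  then obtain z where z: "z \<in> Xmax E s r ord" "\<forall>L. \<exists>N. \<forall>j<L. Y N j = z j" by blast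
  have YB: "Y N \<in> B" for N
  proof -
    obtain j where "(sig ^^ j) x = Y N" using PY[of N] unfolding P_def by blast
    then show ?thesis using orbit_in[OF B(2) x, of j] by simp
  qed
  have "z \<in> B"
  proof (rule closed_lim[OF B(1)])
    show "z \<in> XB E s r" using z(1) unfolding Xmax_def by simp
    show "\<forall>L. \<exists>y\<in>B. \<forall>j<L. y j = z j" using z(2) YB by blast
  qed
  then show ?thesis using z(1) Xmax_eq by auto
qed

lemma LemB:
  assumes i: "i \<in> {1..k}" and B: "closedin TT B" "sig ` B \<subseteq> B" and zm: "zmax i \<in> B"
  shows "Xi i \<subseteq> B"
proof
  have zB: "zmin i \<in> B" using sig_zmax[OF i] zm B(2) by force
  have zXB: "zmin i \<in> XB E s r" by (rule zmin_XB[OF i])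
  have zemin: "\<forall>n. emin E r ord n (zmin i n)"
    using Xmin_eq i unfolding Xmin_def by auto
  fix y assume y: "y \<in> Xi i"
  have yXB: "y \<in> XB E s r" using y Xi_sub by auto
  show "y \<in> B"
  proof (rule closed_lim[OF B(1) yXB], intro allI)
    fix L
    define n where "n = Suc L"
    have n1: "n \<ge> 1" unfolding n_def by simp
    obtain m where m: "m > n" "\<forall>w\<in>Vi m i. \<forall>v\<in>Vi n i. connected_to E s r n m v w"
      using Vi_conn[OF n1 i] by blast
    have u: "s (y n) \<in> Vi n i" using y n1 unfolding Xi_def by simp
    have w: "s (zmin i m) \<in> Vi m i" using zmin_Vi[OF i] m(1) by simp
    obtain q where q: "q \<in> paths_between E s r n m (s (y n)) (s (zmin i m))"
      using m(2) u w unfolding connected_to_def by blast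
    note qp = pb_gen[OF q m(1)]
    define y' where "y' = (\<lambda>j. if j < n then y j else if j < m then q!(j-n) else zmin i j)"
    have y'XB: "y' \<in> XB E s r"
    proof (rule XB_I)
      fix j
      show "y' j \<in> E j"
      proof -
        consider "j < n" | "n \<le> j" "j < m" | "m \<le> j" by linarith
        then show ?thesis
        proof cases
          case 1 then show ?thesis unfolding y'_def using XB_E[OF yXB] by simp
        next
          case 2 then have "j - n < m - n" by simp
          then have "q!(j-n) \<in> E (n + (j-n))" using qp by blast
          then show ?thesis unfolding y'_def using 2 by simp
        next
          case 3 then show ?thesis unfolding y'_def using XB_E[OF zXB] m(1) by simp
        qed
      qed
      show "r (y' j) = s (y' (Suc j))"
      proof -
        consider "Suc j < n" | "Suc j = n" | "n \<le> j" "Suc j < m" | "Suc j = m" | "m \<le> j" by linarith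
        then show ?thesis
        proof cases
          case 1 then show ?thesis unfolding y'_def using XB_r[OF yXB] by simp
        next
          case 2 then show ?thesis unfolding y'_def using XB_r[OF yXB, of j] qp m(1) by auto
        next
          case 3
          then have "r (q!(j-n)) = s (q!Suc (j-n))" using qp by simp
          moreover have "Suc j - n = Suc (j - n)" using 3 by simp
          ultimately show ?thesis unfolding y'_def using 3 by simp
        next
          case 4
          then have "j - n = m - n - 1" "n \<le> j" using m(1) n1 by auto
          then show ?thesis unfolding y'_def using qp 4 by auto
        next
          case 5 then show ?thesis unfolding y'_def using XB_r[OF zXB] m(1) by simp
        qed
      qed
    qed
    have y'T: "y' \<in> T m (zmin i)" unfolding T_def using y'XB m(1) by (auto simp: y'_def)
    have "y' = zmin i \<or> ltN m (zmin i) y'"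
    proof (cases "y' = zmin i")
      case False
      have "\<not> ltN m y' (zmin i)"
      proof
        assume "ltN m y' (zmin i)"
        then obtain jj where jj: "jj < m" "(y' jj, zmin i jj) \<in> ord" "\<forall>l. jj < l \<and> l < m \<longrightarrow> y' l = zmin i l"
          unfolding ltN_def by blast
        have "y' (Suc jj) = zmin i (Suc jj)"
          using jj(3) y'T unfolding T_def by (cases "Suc jj < m") auto
        then have "r (y' jj) = r (zmin i jj)" using XB_r[OF y'XB, of jj] XB_r[OF zXB, of jj] by simp
        then show False using zemin jj(2) XB_E[OF y'XB, of jj] unfolding emin_def by auto
      qed
      then show ?thesis using T_total[OF y'T x_in_T[OF zXB] False] by blast
    qed simp
    then obtain j where "(sig ^^ j) (zmin i) = y'" using orbit[OF zXB y'T] by blast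
    then have "y' \<in> B" using orbit_in[OF B(2) zB, of j] by simp
    moreover have "\<forall>j<L. y' j = y j" unfolding y'_def n_def by simp
    ultimately show "\<exists>y'\<in>B. \<forall>j<L. y' j = y j" by blast
  qed
qed

lemma Xi_minimal: assumes i: "i \<in> {1..k}" shows "minimal_subset TT sig (Xi i)"
  unfolding minimal_subset_def
proof (intro conjI allI impI)
  show "Xi i \<noteq> {}" using zmax_Xi[OF i] by auto
  show "closedin TT (Xi i)" by (rule Xi_closed)
  show "sig ` Xi i = Xi i" using sig_Xi[OF i] Xi_surj[OF i] by auto
  fix B assume B: "B \<subseteq> Xi i \<and> B \<noteq> {} \<and> closedin TT B \<and> sig ` B = B"
  then obtain x where "x \<in> B" by auto
  then have "\<exists>j\<in>{1..k}. zmax j \<in> B" using LemA[of B x] B by auto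
  then obtain j where j: "j \<in> {1..k}" "zmax j \<in> B" by blast
  then have "j = i" using Xi_disj[OF i j(1)] B zmax_Xi[OF j(1)] by auto
  then have "Xi i \<subseteq> B" using LemB[OF i] B j by auto
  then show "B = Xi i" using B by auto
qed

lemma minimal_is_Xi: assumes "minimal_subset TT sig A" shows "A \<in> Xi ` {1..k}"
proof -
  have A: "A \<noteq> {}" "closedin TT A" "sig ` A = A"
    "\<And>B. B \<subseteq> A \<and> B \<noteq> {} \<and> closedin TT B \<and> sig ` B = B \<Longrightarrow> B = A"
    using assms unfolding minimal_subset_def by auto
  obtain x where "x \<in> A" using A by auto
  then have "\<exists>i\<in>{1..k}. zmax i \<in> A" using LemA[of A x] A by auto
  then obtain i where i: "i \<in> {1..k}" "zmax i \<in> A" by blast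
  have sub: "Xi i \<subseteq> A" using LemB[OF i(1) _ _ i(2)] A by auto
  have "Xi i = A"
    by (rule A(4)) (use sub Xi_minimal[OF i(1)] in \<open>auto simp: minimal_subset_def\<close>)
  then show ?thesis using i by auto
qed

lemma main: "finite {A. minimal_subset TT sig A} \<and> card {A. minimal_subset TT sig A} = k"
proof -
  have eq: "{A. minimal_subset TT sig A} = Xi ` {1..k}"
    using minimal_is_Xi Xi_minimal by auto
  have inj: "inj_on Xi {1..k}"
  proof
    fix i j assume "i \<in> {1..k}" "j \<in> {1..k}" "Xi i = Xi j"
    then show "i = j" using Xi_disj zmax_Xi by metis
  qed
  show ?thesis unfolding eq using card_image[OF inj] by simp
qed

end


theorem theorem5p10:
  fixes V :: "nat \<Rightarrow> 'v set" and E :: "nat \<Rightarrow> 'e set"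
    and s r :: "'e \<Rightarrow> 'v" and v0 :: 'v and ord :: "('e \<times> 'e) set" and k :: nat
    and Vi :: "nat \<Rightarrow> nat \<Rightarrow> 'v set" and zmax zmin :: "nat \<Rightarrow> nat \<Rightarrow> 'e"
  assumes "bratteli_diagram V E s r v0"
    and "ordered_diagram V E r ord"
    and "k_simple_ordered V E s r v0 ord k Vi zmax zmin"
    and "non_elementary V E s r k Vi"
  shows "finite {A. minimal_subset (XB_topology E s r) (vershik E s r v0 ord k zmax zmin) A}
       \<and> card {A. minimal_subset (XB_topology E s r) (vershik E s r v0 ord k zmax zmin) A} = k"
proof -
  interpret BV V E s r v0 ord k Vi zmax zmin
    using assms(1-3) by unfold_locales
  show ?thesis by (rule main)
qed

end
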